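(* Let $\Gamma=(V,E)$ be a finite connected graph and $\phi:V\to\mathbb{C}$ a solution of equation (1) with $\gamma:V\to\mathbb{R}$ satisfying $\gamma(x)<1$ for all $x\in V$. Let $n_0$ be the smallest vertex degree of $\Gamma$. Then for every $N>n_0$ there is no invariant embedded framework in $\mathbb{R}^N$ with underlying graph $\Gamma$, positions $x\mapsto\vec x$, invariance function $\gamma$, and $\phi(x)=P(\vec x)$ for all $x\in V$.
   Context: Equation (1) at a vertex $x$ of degree $n(x)$: $\frac{\gamma(x)}{n(x)}\big(\sum_{y\sim x}(\phi(y)-\phi(x))\big)^2=\sum_{y\sim x}(\phi(x)-\phi(y))^2$. A framework in $\mathbb{R}^N$ is a finite simple graph with a point $\vec x\in\mathbb{R}^N$ assigned to each vertex, edges being straight segments; it is embedded if distinct vertices have distinct positions and no two edges meet except at common endpoints. With $P(y_1,\dots,y_N)=y_1+iy_2$, the framework is invariant with invariance function $\gamma:V\to\mathbb{R}$ if for every orthogonal transformation $A$ of $\mathbb{R}^N$ the function $x\mapsto P(A\vec x)$ satisfies equation (1) at every vertex with this $\gamma$. *)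

theory Defs
  imports "HOL-Analysis.Analysis"
begin

definition simple_graph :: "'a set \<Rightarrow> ('a \<Rightarrow> 'a \<Rightarrow> bool) \<Rightarrow> bool" where
  "simple_graph V E \<longleftrightarrow> finite V \<and> (\<forall>x y. E x y \<longrightarrow> x \<in> V \<and> y \<in> V \<and> x \<noteq> y \<and> E y x)"

definition graph_connected :: "'a set \<Rightarrow> ('a \<Rightarrow> 'a \<Rightarrow> bool) \<Rightarrow> bool" where
  "graph_connected V E \<longleftrightarrow> V \<noteq> {} \<and> (\<forall>x\<in>V. \<forall>y\<in>V. E\<^sup>*\<^sup>* x y)"

definition nbrs :: "'a set \<Rightarrow> ('a \<Rightarrow> 'a \<Rightarrow> bool) \<Rightarrow> 'a \<Rightarrow> 'a set" where
  "nbrs V E x = {y \<in> V. E x y}"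

definition deg :: "'a set \<Rightarrow> ('a \<Rightarrow> 'a \<Rightarrow> bool) \<Rightarrow> 'a \<Rightarrow> nat" where
  "deg V E x = card (nbrs V E x)"

definition min_degree :: "'a set \<Rightarrow> ('a \<Rightarrow> 'a \<Rightarrow> bool) \<Rightarrow> nat" where
  "min_degree V E = Min (deg V E ` V)"

definition eq1 :: "'a set \<Rightarrow> ('a \<Rightarrow> 'a \<Rightarrow> bool) \<Rightarrow> ('a \<Rightarrow> real) \<Rightarrow> ('a \<Rightarrow> complex) \<Rightarrow> 'a \<Rightarrow> bool" where
  "eq1 V E \<gamma> \<phi> x \<longleftrightarrow>
     complex_of_real (\<gamma> x / real (deg V E x)) * (\<Sum>y\<in>nbrs V E x. \<phi> y - \<phi> x)^2
     = (\<Sum>y\<in>nbrs V E x. (\<phi> x - \<phi> y)^2)"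

text \<open>Coordinates of R^N: the index type is linearly ordered; coordinate k (0-based)
  is the k-th smallest index. P(y) = y_1 + i y_2.\<close>
definition coord_idx :: "nat \<Rightarrow> 'n::{finite,linorder}" where
  "coord_idx k = sorted_list_of_set (UNIV :: 'n set) ! k"

definition Pmap :: "real^'n::{finite,linorder} \<Rightarrow> complex" where
  "Pmap y = Complex (y $ coord_idx 0) (y $ coord_idx 1)"

definition embedded_framework ::
  "'a set \<Rightarrow> ('a \<Rightarrow> 'a \<Rightarrow> bool) \<Rightarrow> ('a \<Rightarrow> real^'n) \<Rightarrow> bool" where
  "embedded_framework V E pos \<longleftrightarrow> inj_on pos V \<and>
     (\<forall>x y u v. E x y \<and> E u v \<and> {x, y} \<noteq> {u, v} \<longrightarrow>
        closed_segment (pos x) (pos y) \<inter> closed_segment (pos u) (pos v)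
          \<subseteq> pos ` ({x, y} \<inter> {u, v}))"

definition invariant_framework ::
  "'a set \<Rightarrow> ('a \<Rightarrow> 'a \<Rightarrow> bool) \<Rightarrow> ('a \<Rightarrow> real) \<Rightarrow> ('a \<Rightarrow> (real,'n::{finite,linorder}) vec) \<Rightarrow> bool" where
  "invariant_framework V E \<gamma> pos \<longleftrightarrow>
     (\<forall>A :: (real,'n::{finite,linorder}) vec \<Rightarrow> (real,'n) vec. orthogonal_transformation A \<longrightarrow>
        (\<forall>x\<in>V. eq1 V E \<gamma> (\<lambda>z. Pmap (A (pos z))) x))"

end

theory Submission
  imports Defs
begin

lemma reflection_ot:
  fixes w :: "'b::real_inner"
  assumes "w \<noteq> 0"
  shows "orthogonal_transformation (\<lambda>x. x - (2 * (x \<bullet> w) / (w \<bullet> w)) *\<^sub>R w)"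
proof -
  have ww: "w \<bullet> w \<noteq> 0" using assms by simp
  have "linear (\<lambda>x. x - (2 * (x \<bullet> w) / (w \<bullet> w)) *\<^sub>R w)"
    by (intro linearI) (auto simp: algebra_simps inner_add_left add_divide_distrib scaleR_add_left diff_divide_distrib)
  moreover have "(v - (2 * (v \<bullet> w) / (w \<bullet> w)) *\<^sub>R w) \<bullet> (u - (2 * (u \<bullet> w) / (w \<bullet> w)) *\<^sub>R w) = v \<bullet> u" for v u
    using ww by (simp add: inner_diff_left inner_diff_right inner_commute field_simps power2_eq_square)
  ultimately show ?thesis unfolding orthogonal_transformation_def by blast
qed

lemma two_frame:
  fixes u1 u2 e1 e2 :: "real^'n"
  assumes "norm u1 = 1" "norm u2 = 1" "u1 \<bullet> u2 = 0" "norm e1 = 1" "norm e2 = 1" "e1 \<bullet> e2 = 0"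
  obtains h where "orthogonal_transformation h" "h u1 = e1" "h u2 = e2"
proof -
  obtain f where f: "orthogonal_transformation f" "f u2 = e2"
    using orthogonal_transformation_exists[of u2 e2] assms by metis
  define p where "p = f u1"
  have np: "norm p = 1" using f assms by (simp add: p_def orthogonal_transformation_norm)
  have pe2: "p \<bullet> e2 = 0" using f assms unfolding p_def orthogonal_transformation_def by metis
  show ?thesis
  proof (cases "p = e1")
    case True thus ?thesis using that f p_def by blast
  next
    case False
    define w where "w = p - e1"
    have w0: "w \<noteq> 0" using False w_def by simp
    define g where "g = (\<lambda>x. x - (2 * (x \<bullet> w) / (w \<bullet> w)) *\<^sub>R w)"
    have g: "orthogonal_transformation g" unfolding g_def by (rule reflection_ot[OF w0])
    have pp: "p \<bullet> p = 1" "e1 \<bullet> e1 = 1" using np assms(4) by (simp_all add: norm_eq_1)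
    have ww: "w \<bullet> w = 2 - 2 * (p \<bullet> e1)" using pp by (simp add: w_def inner_diff_left inner_diff_right inner_commute)
    have "w \<bullet> w \<noteq> 0" using w0 by simp
    hence c: "2 * (p \<bullet> w) / (w \<bullet> w) = 1" using ww pp by (simp add: w_def inner_diff_right)
    have "g p = p - (2 * (p \<bullet> w) / (w \<bullet> w)) *\<^sub>R w" by (simp add: g_def)
    also have "\<dots> = e1" unfolding c by (simp add: w_def)
    finally have gp: "g p = e1" .
    have "e2 \<bullet> w = 0" using pe2 assms(6) by (simp add: w_def inner_diff_right inner_commute)
    hence ge2: "g e2 = e2" by (simp add: g_def)
    show ?thesis
      using that[of "g \<circ> f"] orthogonal_transformation_compose[OF g f(1)] gp ge2 f p_def by simp
  qed
qed
lemma final_arith: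
  fixes g T Q n :: real
  assumes "Q > 0" "T \<ge> 0" "T \<le> Q * n" "n > 0" "g < 1" "g / n * T = Q"
  shows False
proof (cases "g \<le> 0")
  case True
  have "g / n \<le> 0" using True assms by (simp add: divide_nonpos_pos)
  hence "g / n * T \<le> 0" using mult_nonpos_nonneg assms(2) by blast
  thus False using assms(1,6) by linarith
next
  case False
  have "g / n * T \<le> g / n * (Q * n)" using False assms by (intro mult_left_mono) auto
  also have "\<dots> = g * Q" using assms by simp
  also have "\<dots> < Q" using assms by simp
  finally show False using assms by simp
qed

theorem lemma5p5:
  fixes V :: "'a set" and E :: "'a \<Rightarrow> 'a \<Rightarrow> bool"
    and \<phi> :: "'a \<Rightarrow> complex" and \<gamma> :: "'a \<Rightarrow> real"
  assumes "simple_graph V E"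
    and "graph_connected V E"
    and "\<forall>x\<in>V. deg V E x > 0"
    and "\<forall>x\<in>V. eq1 V E \<gamma> \<phi> x"
    and "\<forall>x\<in>V. \<gamma> x < 1"
    and "CARD('n) > min_degree V E"
  shows "\<not> (\<exists>pos :: 'a \<Rightarrow> real^'n::{finite,linorder}.
             embedded_framework V E pos \<and> invariant_framework V E \<gamma> pos
             \<and> (\<forall>x\<in>V. \<phi> x = Pmap (pos x)))"
proof
  assume "\<exists>pos :: 'a \<Rightarrow> real^'n::{finite,linorder}.
             embedded_framework V E pos \<and> invariant_framework V E \<gamma> pos
             \<and> (\<forall>x\<in>V. \<phi> x = Pmap (pos x))"
  then obtain pos :: "'a \<Rightarrow> real^'n::{finite,linorder}" where emb: "embedded_framework V E pos"
    and inv: "invariant_framework V E \<gamma> pos" by blast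
  have finV: "finite V" and sg: "\<And>x y. E x y \<Longrightarrow> x \<in> V \<and> y \<in> V \<and> x \<noteq> y"
    using assms(1) unfolding simple_graph_def by auto
  have V0: "V \<noteq> {}" using assms(2) unfolding graph_connected_def by auto
  have "min_degree V E \<in> deg V E ` V" unfolding min_degree_def using finV V0 by (intro Min_in) auto
  then obtain x0 where x0: "x0 \<in> V" "deg V E x0 = min_degree V E" by auto
  define S where "S = nbrs V E x0"
  have finS: "finite S" using finV by (simp add: S_def nbrs_def)
  have cardS: "card S > 0" using assms(3) x0(1) unfolding S_def deg_def by blast
  then obtain y0 where y0: "y0 \<in> S" by (metis card_gt_0_iff ex_in_conv)
  have y0E: "y0 \<in> V" "y0 \<noteq> x0" using y0 sg by (auto simp: S_def nbrs_def)
  define v where "v = (\<lambda>y. pos y - pos x0)"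
  have v0: "v y0 \<noteq> 0" using emb y0E x0 unfolding embedded_framework_def inj_on_def v_def by auto
  have "dim (v ` S) \<le> card (v ` S)" using finS by (intro dim_le_card) (auto intro: span_base)
  also have "\<dots> \<le> card S" using finS by (rule card_image_le)
  also have "\<dots> < DIM(real^'n::{finite,linorder})" using assms(6) x0 by (simp add: S_def deg_def)
  finally obtain u where u: "u \<noteq> 0" "\<And>z. z \<in> span (v ` S) \<Longrightarrow> orthogonal u z"
    using orthogonal_to_subspace_exists by blast
  define u2 where "u2 = u /\<^sub>R norm u"
  define u1 where "u1 = v y0 /\<^sub>R norm (v y0)"
  have ortho: "v y \<bullet> u2 = 0" if "y \<in> S" for y
    using u(2)[of "v y"] that by (auto simp: u2_def orthogonal_def inner_commute span_base)
  have u12: "u1 \<bullet> u2 = 0" using ortho[OF y0] by (simp add: u1_def)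
  define L where "L = sorted_list_of_set (UNIV :: ('n::{finite,linorder}) set)"
  have dL: "distinct L" "length L = CARD('n::{finite,linorder})" by (simp_all add: L_def)
  have "card S < CARD('n::{finite,linorder})" using assms(6) x0 by (simp add: S_def deg_def)
  hence c2: "CARD('n::{finite,linorder}) \<ge> 2" using cardS by linarith
  have cne: "coord_idx 0 \<noteq> (coord_idx 1 :: 'n::{finite,linorder})"
    unfolding coord_idx_def L_def[symmetric] using dL c2 by (simp add: nth_eq_iff_index_eq)
  define e1 where "e1 = (axis (coord_idx 0) 1 :: real^'n::{finite,linorder})"
  define e2 where "e2 = (axis (coord_idx 1) 1 :: real^'n::{finite,linorder})"
  obtain h where h: "orthogonal_transformation h" "h u1 = e1" "h u2 = e2"
    using two_frame[of u1 u2 e1 e2] u v0 u12 cne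
    by (auto simp: u1_def u2_def e1_def e2_def inner_axis_axis)
  have hin: "h a \<bullet> h b = a \<bullet> b" for a b using h(1) unfolding orthogonal_transformation_def by blast
  have hlin: "linear h" using h(1) unfolding orthogonal_transformation_def by blast
  define a where "a = (\<lambda>y. v y \<bullet> u1)"
  have diff: "Pmap (h (pos y)) - Pmap (h (pos x0)) = complex_of_real (a y)" if "y \<in> S" for y
  proof -
    have hd: "h (pos y) - h (pos x0) = h (v y)" using hlin by (simp add: v_def linear_diff)
    have 1: "h (v y) $ coord_idx 0 = a y"
      using hin[of "v y" u1] h(2) by (simp add: a_def e1_def inner_axis)
    have 2: "h (v y) $ coord_idx 1 = 0"
      using hin[of "v y" u2] h(3) ortho[OF that] by (simp add: e2_def inner_axis)
    have "Pmap (h (pos y)) - Pmap (h (pos x0)) = Complex ((h (pos y) - h (pos x0)) $ coord_idx 0) ((h (pos y) - h (pos x0)) $ coord_idx 1)"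
      by (simp add: Pmap_def complex_eq_iff)
    thus ?thesis using 1 2 hd by (simp add: complex_eq_iff)
  qed
  have "eq1 V E \<gamma> (\<lambda>z. Pmap (h (pos z))) x0"
    using inv h(1) x0 unfolding invariant_framework_def by blast
  moreover have "(\<Sum>y\<in>S. Pmap (h (pos y)) - Pmap (h (pos x0))) = (\<Sum>y\<in>S. complex_of_real (a y))"
    using diff by (rule sum.cong[OF refl])
  moreover have "(\<Sum>y\<in>S. (Pmap (h (pos x0)) - Pmap (h (pos y)))^2) = (\<Sum>y\<in>S. (- complex_of_real (a y))^2)"
  proof (rule sum.cong[OF refl])
    fix y assume yS: "y \<in> S"
    have "Pmap (h (pos x0)) - Pmap (h (pos y)) = - (Pmap (h (pos y)) - Pmap (h (pos x0)))" by simp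
    also have "\<dots> = - complex_of_real (a y)" using diff[OF yS] by simp
    finally show "(Pmap (h (pos x0)) - Pmap (h (pos y)))^2 = (- complex_of_real (a y))^2" by simp
  qed
  ultimately have "complex_of_real (\<gamma> x0 / real (card S)) * (\<Sum>y\<in>S. complex_of_real (a y))^2
      = (\<Sum>y\<in>S. (- complex_of_real (a y))^2)"
    unfolding eq1_def S_def[symmetric] deg_def by simp
  hence "complex_of_real (\<gamma> x0 / real (card S) * (\<Sum>y\<in>S. a y)^2)
      = complex_of_real (\<Sum>y\<in>S. (a y)^2)" by simp
  hence eq: "\<gamma> x0 / real (card S) * (\<Sum>y\<in>S. a y)^2 = (\<Sum>y\<in>S. (a y)^2)"
    using of_real_eq_iff by blast
  have ay0: "a y0 \<noteq> 0" using v0 by (simp add: a_def u1_def)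
  have "0 < (a y0)^2" using ay0 by simp
  also have "\<dots> \<le> (\<Sum>y\<in>S. (a y)^2)" using finS y0 by (intro member_le_sum) auto
  finally have Qp: "(\<Sum>y\<in>S. (a y)^2) > 0" .
  show False
    using final_arith[OF Qp _ sum_squared_le_sum_of_squares[of a S] _ _ eq] cardS assms(5) x0 by simp
qed

end
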